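(* Let $\mathcal{A}$ be a topological ring containing $\mathbb{Q}$, let $\mathcal{B}$ be a complete topological $\mathcal{A}$-algebra and let $\partial$ be a topologically integrable $\mathcal{A}$-derivation of $\mathcal{B}$. Then: (a) For every $f\in\operatorname{Ker}(\partial)$, the $\mathcal{A}$-derivation $f\partial$ of $\mathcal{B}$ is topologically integrable. (b) For every multiplicatively closed subset $S$ of $\operatorname{Ker}(\partial)$, the induced $\mathcal{A}$-derivation $\widehat{S^{-1}\partial}$ of $\widehat{S^{-1}\mathcal{B}}$ is topologically integrable. (c) For every surjective open homomorphism of complete topological rings $\pi\colon\mathcal{B}\to\mathcal{C}$ such that $\partial(\operatorname{Ker}\pi)\subseteq\operatorname{Ker}\pi$, the induced $\mathcal{A}$-derivation $\overline{\partial}$ of $\mathcal{C}\cong\mathcal{B}/\operatorname{Ker}\pi$ is topologically integrable. (d) For every topologically integrable $\mathcal{A}$-derivation $\partial'$ of $\mathcal{B}$ such that $\partial\circ\partial'=\partial'\circ\partial$, the $\mathcal{A}$-derivation $\partial+\partial'$ of $\mathcal{B}$ is topologically integrable.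
   Context: Conventions: topological rings are linearly topologized with a countable fundamental system of open ideals; homomorphisms are continuous; complete means the canonical map to $\varprojlim_{\mathfrak{a}}\mathcal{B}/\mathfrak{a}$ (open ideals, discrete quotients) is a topological isomorphism; a complete topological $\mathcal{A}$-algebra is a complete topological ring with a continuous homomorphism from $\mathcal{A}$. A continuous $\mathcal{A}$-derivation $\partial\colon\mathcal{B}\to\mathcal{B}$ is a continuous $\mathcal{A}$-linear map satisfying the Leibniz rule; it is topologically integrable if the sequence of iterates $(\partial^i)_{i\in\mathbb{N}}$ converges continuously to $0$: for every $b\in\mathcal{B}$ and every open ideal $\mathfrak{b}'$ there exist an open ideal $\mathfrak{b}$ and $n_0$ with $\partial^n(b+\mathfrak{b})\subseteq\mathfrak{b}'$ for all $n\ge n_0$. For a multiplicatively closed $S\subseteq\mathcal{B}$, $\widehat{S^{-1}\mathcal{B}}$ is the separated completion of $S^{-1}\mathcal{B}$ for the linear topology generated by the ideals $S^{-1}\mathfrak{b}$, $\mathfrak{b}$ open, with canonical map $\tilde j\colon\mathcal{B}\to\widehat{S^{-1}\mathcal{B}}$, and $\widehat{S^{-1}\partial}$ is the continuous derivation of $\widehat{S^{-1}\mathcal{B}}$ induced by $\partial$ (satisfying $\widehat{S^{-1}\partial}\circ\tilde j=\tilde j\circ\partial$). In (c), $\overline{\partial}$ is the derivation with $\overline{\partial}\circ\pi=\pi\circ\partial$. *)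

theory Defs
  imports Main
begin

text \<open>A linear topology with a countable fundamental system of open ideals is
represented by a decreasing sequence of ideals I 0, I 1, ... (every countable
fundamental system can be replaced by a decreasing one generating the same topology).\<close>

definition is_ideal :: "'b::comm_ring_1 set \<Rightarrow> bool" where
  "is_ideal J \<longleftrightarrow> 0 \<in> J \<and> (\<forall>x\<in>J. \<forall>y\<in>J. x + y \<in> J) \<and> (\<forall>x\<in>J. - x \<in> J)
     \<and> (\<forall>r x. x \<in> J \<longrightarrow> r * x \<in> J)"

definition lin_top :: "(nat \<Rightarrow> 'b::comm_ring_1 set) \<Rightarrow> bool" where
  "lin_top I \<longleftrightarrow> (\<forall>n. is_ideal (I n)) \<and> (\<forall>n. I (Suc n) \<subseteq> I n)"

definition open_ideal :: "(nat \<Rightarrow> 'b::comm_ring_1 set) \<Rightarrow> 'b set \<Rightarrow> bool" where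
  "open_ideal I J \<longleftrightarrow> is_ideal J \<and> (\<exists>n. I n \<subseteq> J)"

text \<open>Completeness: the canonical map to the inverse limit of the discrete quotients
B / I n is bijective (it is then automatically a topological isomorphism).
Injectivity = separatedness; surjectivity = every compatible family (given by
representatives x n) comes from an element.\<close>

definition complete_top :: "(nat \<Rightarrow> 'b::comm_ring_1 set) \<Rightarrow> bool" where
  "complete_top I \<longleftrightarrow> lin_top I \<and> (\<Inter>n. I n) = {0}
     \<and> (\<forall>x. (\<forall>n. x (Suc n) - x n \<in> I n) \<longrightarrow> (\<exists>b. \<forall>n. b - x n \<in> I n))"

definition cont_map :: "(nat \<Rightarrow> 'b::comm_ring_1 set) \<Rightarrow> (nat \<Rightarrow> 'c::comm_ring_1 set)
    \<Rightarrow> ('b \<Rightarrow> 'c) \<Rightarrow> bool" where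
  "cont_map I J f \<longleftrightarrow> (\<forall>x m. \<exists>k. \<forall>y\<in>I k. f (x + y) - f x \<in> J m)"

definition open_map :: "(nat \<Rightarrow> 'b::comm_ring_1 set) \<Rightarrow> (nat \<Rightarrow> 'c::comm_ring_1 set)
    \<Rightarrow> ('b \<Rightarrow> 'c) \<Rightarrow> bool" where
  "open_map I J f \<longleftrightarrow> (\<forall>x k. \<exists>m. {f x + z | z. z \<in> J m} \<subseteq> f ` {x + y | y. y \<in> I k})"

definition ring_hom :: "('b::comm_ring_1 \<Rightarrow> 'c::comm_ring_1) \<Rightarrow> bool" where
  "ring_hom f \<longleftrightarrow> f 1 = 1 \<and> (\<forall>x y. f (x + y) = f x + f y) \<and> (\<forall>x y. f (x * y) = f x * f y)"

text \<open>Continuous A-derivation, where B is an A-algebra via the homomorphism phi.\<close>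

definition cont_A_der :: "(nat \<Rightarrow> 'b::comm_ring_1 set) \<Rightarrow> ('a::comm_ring_1 \<Rightarrow> 'b)
    \<Rightarrow> ('b \<Rightarrow> 'b) \<Rightarrow> bool" where
  "cont_A_der I phi D \<longleftrightarrow> cont_map I I D \<and> (\<forall>x y. D (x + y) = D x + D y)
     \<and> (\<forall>a x. D (phi a * x) = phi a * D x) \<and> (\<forall>x y. D (x * y) = x * D y + y * D x)"

definition top_integrable :: "(nat \<Rightarrow> 'b::comm_ring_1 set) \<Rightarrow> ('b \<Rightarrow> 'b) \<Rightarrow> bool" where
  "top_integrable I D \<longleftrightarrow> (\<forall>b J'. open_ideal I J' \<longrightarrow>
     (\<exists>J n0. open_ideal I J \<and> (\<forall>n\<ge>n0. (D ^^ n) ` {b + y | y. y \<in> J} \<subseteq> J')))"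

text \<open>S^{-1}B / S^{-1}(I n) is realized as (B x S) modulo the relation
 (b,s) ~ (b',s') iff u (b s' - b' s) \<in> I n for some u in S
 (i.e. b/s - b'/s' \<in> S^{-1}(I n)).  The separated completion is the inverse limit of
these quotients: compatible sequences of classes.  Its fundamental system of open ideals
consists of the kernels of the projections to the n-th quotient.\<close>

definition loc_rel :: "(nat \<Rightarrow> 'b::comm_ring_1 set) \<Rightarrow> 'b set \<Rightarrow> nat \<Rightarrow> (('b \<times> 'b) \<times> ('b \<times> 'b)) set" where
  "loc_rel I S n = {((b, s), (b', s')). s \<in> S \<and> s' \<in> S \<and> (\<exists>u\<in>S. u * (b * s' - b' * s) \<in> I n)}"

definition loc_quot :: "(nat \<Rightarrow> 'b::comm_ring_1 set) \<Rightarrow> 'b set \<Rightarrow> nat \<Rightarrow> ('b \<times> 'b) set set" where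
  "loc_quot I S n = (UNIV \<times> S) // loc_rel I S n"

definition loc_compl :: "(nat \<Rightarrow> 'b::comm_ring_1 set) \<Rightarrow> 'b set \<Rightarrow> (nat \<Rightarrow> ('b \<times> 'b) set) set" where
  "loc_compl I S = {x. (\<forall>n. x n \<in> loc_quot I S n) \<and> (\<forall>n. x (Suc n) \<subseteq> x n)}"

text \<open>The derivation of the completion induced by D (for S inside Ker D we have
(S^{-1}D)(b/s) = D(b)/s); its n-th component is computed from representatives at
sufficiently deep levels (possible by continuity of D).\<close>

definition loc_der :: "(nat \<Rightarrow> 'b::comm_ring_1 set) \<Rightarrow> 'b set \<Rightarrow> ('b \<Rightarrow> 'b)
    \<Rightarrow> (nat \<Rightarrow> ('b \<times> 'b) set) \<Rightarrow> (nat \<Rightarrow> ('b \<times> 'b) set)" where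
  "loc_der I S D x = (\<lambda>n. THE c. \<exists>k. \<forall>k'\<ge>k. \<forall>p\<in>x k'. c = loc_rel I S n `` {(D (fst p), snd p)})"

text \<open>Topological integrability on the completion, stated with the fundamental system
of open ideals (kernels of the projections); y \<in> x + ker_k means y k = x k.\<close>

definition compl_top_integrable :: "(nat \<Rightarrow> 'b::comm_ring_1 set) \<Rightarrow> 'b set
    \<Rightarrow> ((nat \<Rightarrow> ('b \<times> 'b) set) \<Rightarrow> (nat \<Rightarrow> ('b \<times> 'b) set)) \<Rightarrow> bool" where
  "compl_top_integrable I S Dh \<longleftrightarrow> (\<forall>x\<in>loc_compl I S. \<forall>m. \<exists>k n0. \<forall>n\<ge>n0.
     \<forall>y\<in>loc_compl I S. y k = x k \<longrightarrow> (Dh ^^ n) y m = loc_rel I S m `` {(0, 1)})"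

end

theory Submission
  imports Defs
begin


lemma ideal_0: "is_ideal J \<Longrightarrow> 0 \<in> J" by (simp add: is_ideal_def)
lemma ideal_add: "is_ideal J \<Longrightarrow> x \<in> J \<Longrightarrow> y \<in> J \<Longrightarrow> x + y \<in> J" by (simp add: is_ideal_def)
lemma ideal_uminus: "is_ideal J \<Longrightarrow> x \<in> J \<Longrightarrow> - x \<in> J" by (simp add: is_ideal_def)
lemma ideal_diff: "is_ideal J \<Longrightarrow> x \<in> J \<Longrightarrow> y \<in> J \<Longrightarrow> x - y \<in> J"
  by (metis diff_conv_add_uminus ideal_add ideal_uminus)
lemma ideal_mult: "is_ideal J \<Longrightarrow> x \<in> J \<Longrightarrow> r * x \<in> J" by (simp add: is_ideal_def)
lemma ideal_mult2: "is_ideal J \<Longrightarrow> x \<in> J \<Longrightarrow> x * r \<in> J" by (metis ideal_mult mult.commute)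
lemma ideal_diff_rev: "is_ideal J \<Longrightarrow> x - y \<in> J \<Longrightarrow> y \<in> J \<Longrightarrow> x \<in> J"
  by (metis diff_add_cancel ideal_add)

lemma lin_top_ideal: "lin_top I \<Longrightarrow> is_ideal (I n)" by (simp add: lin_top_def)
lemma lin_top_mono: "lin_top I \<Longrightarrow> m \<le> n \<Longrightarrow> I n \<subseteq> I m"
  using lift_Suc_antimono_le[of I] unfolding lin_top_def by blast
lemma open_ideal_self: "lin_top I \<Longrightarrow> open_ideal I (I m)"
  by (auto simp: open_ideal_def lin_top_ideal)

lemma add_hom_0: fixes f :: "'b::comm_ring_1 \<Rightarrow> 'c::comm_ring_1" assumes "\<forall>x y. f (x + y) = f x + f y" shows "f 0 = (0::'c::comm_ring_1)"
proof -
  have "f (0 + 0) = f 0 + f 0" using assms by blast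
  then show ?thesis by (metis add_cancel_right_right add_0)
qed
lemma add_hom_minus: fixes f :: "'b::comm_ring_1 \<Rightarrow> 'c::comm_ring_1" assumes "\<forall>x y. f (x + y) = (f x + f y::'c::comm_ring_1)" shows "f (- x) = - f x"
proof -
  have "f (x + - x) = f x + f (- x)" using assms by blast
  then have "0 = f x + f (- x)" using add_hom_0[OF assms] by simp
  then show ?thesis using minus_unique[of "f x" "f (- x)"] by simp
qed
lemma add_hom_diff: fixes f :: "'b::comm_ring_1 \<Rightarrow> 'c::comm_ring_1" assumes "\<forall>x y. f (x + y) = (f x + f y::'c::comm_ring_1)" shows "f (x - y) = f x - f y"
proof -
  have "f (x + - y) = f x + f (- y)" using assms by blast
  then show ?thesis using add_hom_minus[OF assms, of y] by (simp only: diff_conv_add_uminus)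
qed

lemma funpow_additive: fixes D :: "'b::comm_ring_1 \<Rightarrow> 'b"
  assumes "\<forall>x y. D (x + y) = D x + D y" shows "(D ^^ n) (x + y) = (D ^^ n) x + (D ^^ n) y"
  by (induction n arbitrary: x y) (simp_all add: assms)

lemma funpow_const: fixes D :: "'b::comm_ring_1 \<Rightarrow> 'b" assumes "\<forall>x y. D (x * y) = x * D y + y * D x" "D c = 0"
  shows "(D ^^ n) (c * x) = c * (D ^^ n) x"
  using assms by (induction n) simp_all

lemma cont_mapD: "cont_map I J f \<Longrightarrow> \<exists>k. \<forall>y\<in>I k. f (x + y) - f x \<in> J m"
  unfolding cont_map_def by blast

lemma cont_map0: fixes f :: "'b::comm_ring_1 \<Rightarrow> 'c::comm_ring_1"
  assumes "cont_map I J f" "\<forall>x y. f (x + y) = f x + f y" shows "\<exists>k. f ` I k \<subseteq> J m"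
proof -
  obtain k where k: "\<forall>y\<in>I k. f (0 + y) - f 0 \<in> J m" using cont_mapD[OF assms(1)] by blast
  have "f ` I k \<subseteq> J m"
  proof
    fix z assume "z \<in> f ` I k"
    then obtain y where "y \<in> I k" "z = f y" by blast
    then show "z \<in> J m" using k add_hom_0[OF assms(2)] by simp
  qed
  then show ?thesis by (rule exI)
qed

lemma der_cont0: assumes "cont_A_der I phi D" shows "\<exists>k. D ` I k \<subseteq> I m"
  using assms cont_map0 unfolding cont_A_der_def by blast

lemma iter_cont: assumes "cont_A_der I phi D" shows "\<exists>q. (D ^^ n) ` I q \<subseteq> I m"
proof (induction n arbitrary: m)
  case 0
  have "(D ^^ 0) ` I m \<subseteq> I m" by simp
  then show ?case by blast
next
  case (Suc n)
  obtain k where k: "D ` I k \<subseteq> I m" using der_cont0[OF assms] by blast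
  obtain q where "(D ^^ n) ` I q \<subseteq> I k" using Suc by blast
  then have "(D ^^ Suc n) ` I q \<subseteq> I m" using k by auto
  then show ?case by (rule exI)
qed

lemma top_integrableD: "top_integrable I D \<Longrightarrow> open_ideal I J' \<Longrightarrow>
   \<exists>J n0. open_ideal I J \<and> (\<forall>n\<ge>n0. (D ^^ n) ` {b + y | y. y \<in> J} \<subseteq> J')"
  unfolding top_integrable_def by blast

lemma uniform: assumes "lin_top I" "cont_A_der I phi D" "top_integrable I D"
  shows "\<exists>q. \<forall>n. (D ^^ n) ` I q \<subseteq> I m"
proof -
  obtain J n0 where J: "open_ideal I J" and n0: "\<forall>n\<ge>n0. (D ^^ n) ` {0 + y | y. y \<in> J} \<subseteq> I m"
    using top_integrableD[OF assms(3) open_ideal_self[OF assms(1)], of 0] by blast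
  obtain p where p: "I p \<subseteq> J" using J by (auto simp: open_ideal_def)
  have "\<exists>q. \<forall>n<N. (D ^^ n) ` I q \<subseteq> I m" for N
  proof (induction N)
    case 0 then show ?case by auto
  next
    case (Suc N)
    then obtain q where q: "\<forall>n<N. (D ^^ n) ` I q \<subseteq> I m" by blast
    obtain q' where q': "(D ^^ N) ` I q' \<subseteq> I m" using iter_cont[OF assms(2)] by blast
    have "\<forall>n<Suc N. (D ^^ n) ` I (max q q') \<subseteq> I m"
    proof (intro allI impI)
      fix n assume "n < Suc N"
      then consider "n < N" | "n = N" by linarith
      then show "(D ^^ n) ` I (max q q') \<subseteq> I m"
      proof cases
        case 1
        have s: "I (max q q') \<subseteq> I q" by (rule lin_top_mono[OF assms(1)]) simp
        from q 1 have "(D ^^ n) ` I q \<subseteq> I m" by blast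
        then show ?thesis using image_mono[OF s, of "D ^^ n"] by (rule_tac subset_trans) auto
      next
        case 2
        have s: "I (max q q') \<subseteq> I q'" by (rule lin_top_mono[OF assms(1)]) simp
        then show ?thesis using image_mono[OF s, of "D ^^ n"] q' 2 by (rule_tac subset_trans) auto
      qed
    qed
    then show ?case by blast
  qed
  then obtain q where q: "\<forall>n<n0. (D ^^ n) ` I q \<subseteq> I m" by blast
  have "(D ^^ n) ` I (max p q) \<subseteq> I m" for n
  proof (cases "n < n0")
    case True
    have s: "I (max p q) \<subseteq> I q" by (rule lin_top_mono[OF assms(1)]) simp
    from q True have "(D ^^ n) ` I q \<subseteq> I m" by blast
    then show ?thesis using image_mono[OF s, of "D ^^ n"] by (rule_tac subset_trans) auto
  next
    case False
    have "I (max p q) \<subseteq> J" using p lin_top_mono[OF assms(1), of p "max p q"] by auto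
    moreover have "(D ^^ n) ` {0 + y | y. y \<in> J} \<subseteq> I m" using n0 False by simp
    ultimately show ?thesis by auto
  qed
  then show ?thesis by blast
qed



lemma cont_A_derD:
  assumes "cont_A_der I phi D"
  shows "cont_map I I D" "\<forall>x y. D (x + y) = D x + D y" "\<forall>a x. D (phi a * x) = phi a * D x"
    "\<forall>x y. D (x * y) = x * D y + y * D x"
  using assms unfolding cont_A_der_def by auto

lemma part_a:
  fixes D :: "'b::comm_ring_1 \<Rightarrow> 'b"
  assumes lt: "lin_top I" and cd: "cont_A_der I phi D" and ti: "top_integrable I D" and f: "D f = 0"
  shows "cont_A_der I phi (\<lambda>b. f * D b) \<and> top_integrable I (\<lambda>b. f * D b)"
proof
  note d = cont_A_derD[OF cd]
  have cm: "cont_map I I (\<lambda>b. f * D b)"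
    unfolding cont_map_def
  proof (intro allI)
    fix x m
    obtain k where k: "\<forall>y\<in>I k. D (x + y) - D x \<in> I m" using cont_mapD[OF d(1)] by blast
    have "\<forall>y\<in>I k. f * D (x + y) - f * D x \<in> I m"
    proof
      fix y assume "y \<in> I k"
      then have "f * (D (x + y) - D x) \<in> I m" using k ideal_mult[OF lin_top_ideal[OF lt]] by blast
      then show "f * D (x + y) - f * D x \<in> I m" by (simp add: algebra_simps)
    qed
    then show "\<exists>k. \<forall>y\<in>I k. f * D (x + y) - f * D x \<in> I m" by (rule exI)
  qed
  show "cont_A_der I phi (\<lambda>b. f * D b)"
    unfolding cont_A_der_def using cm d(2,3,4) by (simp add: algebra_simps)
  have pow: "((\<lambda>b. f * D b) ^^ n) x = f ^ n * (D ^^ n) x" for n x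
  proof (induction n)
    case 0 then show ?case by simp
  next
    case (Suc n)
    have "D (f ^ n * (D ^^ n) x) = f ^ n * D ((D ^^ n) x)"
    proof -
      have "D (f ^ n) = 0"
      proof (induction n)
        case 0
        have "D (1 * 1) = 1 * D 1 + 1 * D 1" using d(4) by blast
        then show ?case by simp
      next
        case (Suc n)
        have "D (f * f ^ n) = f * D (f ^ n) + f ^ n * D f" using d(4) by blast
        then show ?case using Suc f by simp
      qed
      moreover have "D (f ^ n * (D ^^ n) x) = f ^ n * D ((D ^^ n) x) + (D ^^ n) x * D (f ^ n)"
        using d(4) by blast
      ultimately show ?thesis by simp
    qed
    then show ?case using Suc by simp
  qed
  show "top_integrable I (\<lambda>b. f * D b)"
    unfolding top_integrable_def
  proof (intro allI impI)
    fix b J' assume J': "open_ideal I J'"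
    obtain J n0 where J: "open_ideal I J" and n0: "\<forall>n\<ge>n0. (D ^^ n) ` {b + y | y. y \<in> J} \<subseteq> J'"
      using top_integrableD[OF ti J'] by blast
    have "\<forall>n\<ge>n0. ((\<lambda>b. f * D b) ^^ n) ` {b + y | y. y \<in> J} \<subseteq> J'"
    proof (intro allI impI subsetI)
      fix n z assume n: "n \<ge> n0" and z: "z \<in> ((\<lambda>b. f * D b) ^^ n) ` {b + y | y. y \<in> J}"
      then obtain w where w: "w \<in> {b + y | y. y \<in> J}" and zw: "z = ((\<lambda>b. f * D b) ^^ n) w" by blast
      have "(D ^^ n) w \<in> J'" using n0 n w by blast
      then have "f ^ n * (D ^^ n) w \<in> J'" using J' ideal_mult unfolding open_ideal_def by blast
      then show "z \<in> J'" using zw pow by simp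
    qed
    then show "\<exists>J n0. open_ideal I J \<and> (\<forall>n\<ge>n0. ((\<lambda>b. f * D b) ^^ n) ` {b + y | y. y \<in> J} \<subseteq> J')"
      using J by blast
  qed
qed



lemma comm_pow1: assumes "D \<circ> D' = D' \<circ> D" shows "(D' ^^ l) (D x) = D ((D' ^^ l) x)"
proof (induction l)
  case 0 then show ?case by simp
next
  case (Suc l)
  have "D' (D ((D' ^^ l) x)) = D (D' ((D' ^^ l) x))" using assms by (metis comp_apply)
  then show ?case using Suc by simp
qed

lemma comm_pow: assumes "D \<circ> D' = D' \<circ> D" shows "(D ^^ k) ((D' ^^ l) x) = (D' ^^ l) ((D ^^ k) x)"
proof (induction k)
  case 0 then show ?case by simp
next
  case (Suc k)
  then show ?case using comm_pow1[OF assms, of l "(D ^^ k) x"] by simp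
qed

lemma sum_pow:
  fixes D D' :: "'b::comm_ring_1 \<Rightarrow> 'b"
  assumes a: "\<forall>x y. D (x + y) = D x + D y" and a': "\<forall>x y. D' (x + y) = D' x + D' y"
    and c: "D \<circ> D' = D' \<circ> D" and J: "is_ideal J"
  shows "\<forall>x. (\<forall>k l. k + l = n \<longrightarrow> (D ^^ k) ((D' ^^ l) x) \<in> J) \<longrightarrow> ((\<lambda>b. D b + D' b) ^^ n) x \<in> J"
proof (induction n)
  case 0 then show ?case by auto
next
  case (Suc n)
  show ?case
  proof (intro allI impI)
    fix x assume h: "\<forall>k l. k + l = Suc n \<longrightarrow> (D ^^ k) ((D' ^^ l) x) \<in> J"
    have aF: "\<forall>x y. (\<lambda>b. D b + D' b) (x + y) = (\<lambda>b. D b + D' b) x + (\<lambda>b. D b + D' b) y"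
      using a a' by (simp add: algebra_simps)
    have e: "((\<lambda>b. D b + D' b) ^^ Suc n) x = ((\<lambda>b. D b + D' b) ^^ n) (D x) + ((\<lambda>b. D b + D' b) ^^ n) (D' x)"
      using funpow_additive[OF aF, of n "D x" "D' x"] by (simp only: funpow_Suc_right comp_apply)
    have 1: "((\<lambda>b. D b + D' b) ^^ n) (D x) \<in> J"
    proof -
      have "\<forall>k l. k + l = n \<longrightarrow> (D ^^ k) ((D' ^^ l) (D x)) \<in> J"
      proof (intro allI impI)
        fix k l assume "k + l = n"
        then have "(D ^^ Suc k) ((D' ^^ l) x) \<in> J" using h[rule_format, of "Suc k" l] by simp
        moreover have "(D ^^ k) ((D' ^^ l) (D x)) = (D ^^ k) (D ((D' ^^ l) x))" using comm_pow1[OF c, of l x] by simp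
        moreover have "(D ^^ k) (D ((D' ^^ l) x)) = (D ^^ Suc k) ((D' ^^ l) x)" by (simp only: funpow_Suc_right comp_apply)
        ultimately show "(D ^^ k) ((D' ^^ l) (D x)) \<in> J" by simp
      qed
      then show ?thesis using Suc by blast
    qed
    have 2: "((\<lambda>b. D b + D' b) ^^ n) (D' x) \<in> J"
    proof -
      have "\<forall>k l. k + l = n \<longrightarrow> (D ^^ k) ((D' ^^ l) (D' x)) \<in> J"
      proof (intro allI impI)
        fix k l assume "k + l = n"
        then have "(D ^^ k) ((D' ^^ Suc l) x) \<in> J" using h[rule_format, of k "Suc l"] by simp
        then show "(D ^^ k) ((D' ^^ l) (D' x)) \<in> J"
          by (simp only: funpow_Suc_right comp_apply)
      qed
      then show ?thesis using Suc by blast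
    qed
    show "((\<lambda>b. D b + D' b) ^^ Suc n) x \<in> J" using e 1 2 ideal_add[OF J] by simp
  qed
qed

lemma open_ideal_inter: assumes "lin_top I" "open_ideal I J1" "open_ideal I J2"
  shows "open_ideal I (J1 \<inter> J2)"
proof -
  obtain p1 p2 where p: "I p1 \<subseteq> J1" "I p2 \<subseteq> J2" using assms(2,3) by (auto simp: open_ideal_def)
  have "I (max p1 p2) \<subseteq> I p1" "I (max p1 p2) \<subseteq> I p2" using lin_top_mono[OF assms(1)] by auto
  then have "I (max p1 p2) \<subseteq> J1 \<inter> J2" using p by blast
  moreover have "is_ideal (J1 \<inter> J2)" using assms(2,3) unfolding open_ideal_def is_ideal_def by blast
  ultimately show ?thesis unfolding open_ideal_def by blast
qed

lemma imgD: "\<forall>n\<ge>n0. (F ^^ n) ` {b + y | y. y \<in> J} \<subseteq> K \<Longrightarrow> n \<ge> n0 \<Longrightarrow> y \<in> J \<Longrightarrow> (F ^^ n) (b + y) \<in> K"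
  by blast

lemma imgD2: "f ` A \<subseteq> B \<Longrightarrow> x \<in> A \<Longrightarrow> f x \<in> B" by blast

lemma part_d:
  fixes D D' :: "'b::comm_ring_1 \<Rightarrow> 'b"
  assumes lt: "lin_top I" and cd: "cont_A_der I phi D" and ti: "top_integrable I D"
    and cd': "cont_A_der I phi D'" and ti': "top_integrable I D'" and c: "D \<circ> D' = D' \<circ> D"
  shows "cont_A_der I phi (\<lambda>b. D b + D' b) \<and> top_integrable I (\<lambda>b. D b + D' b)"
proof
  note d = cont_A_derD[OF cd] and d' = cont_A_derD[OF cd']
  have cm: "cont_map I I (\<lambda>b. D b + D' b)"
    unfolding cont_map_def
  proof (intro allI)
    fix x m
    obtain k1 where k1: "\<forall>y\<in>I k1. D (x + y) - D x \<in> I m" using cont_mapD[OF d(1)] by blast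
    obtain k2 where k2: "\<forall>y\<in>I k2. D' (x + y) - D' x \<in> I m" using cont_mapD[OF d'(1)] by blast
    have "\<forall>y\<in>I (max k1 k2). (D (x + y) + D' (x + y)) - (D x + D' x) \<in> I m"
    proof
      fix y assume y: "y \<in> I (max k1 k2)"
      have "y \<in> I k1" using y lin_top_mono[OF lt, of k1 "max k1 k2"] by auto
      have "y \<in> I k2" using y lin_top_mono[OF lt, of k2 "max k1 k2"] by auto
      have "D (x + y) - D x \<in> I m" using k1 \<open>y \<in> I k1\<close> by blast
      moreover have "D' (x + y) - D' x \<in> I m" using k2 \<open>y \<in> I k2\<close> by blast
      ultimately have "(D (x + y) - D x) + (D' (x + y) - D' x) \<in> I m"
        by (rule ideal_add[OF lin_top_ideal[OF lt]])
      then show "(D (x + y) + D' (x + y)) - (D x + D' x) \<in> I m" by (simp add: algebra_simps)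
    qed
    then show "\<exists>k. \<forall>y\<in>I k. (D (x + y) + D' (x + y)) - (D x + D' x) \<in> I m" by (rule exI)
  qed
  show "cont_A_der I phi (\<lambda>b. D b + D' b)"
    unfolding cont_A_der_def using cm d(2,3,4) d'(2,3,4) by (simp add: algebra_simps)
  show "top_integrable I (\<lambda>b. D b + D' b)"
    unfolding top_integrable_def
  proof (intro allI impI)
    fix b J' assume J': "open_ideal I J'"
    obtain m where m: "I m \<subseteq> J'" using J' by (auto simp: open_ideal_def)
    have J'i: "is_ideal J'" using J' by (simp add: open_ideal_def)
    obtain q where q: "\<forall>n. (D ^^ n) ` I q \<subseteq> I m" using uniform[OF lt cd ti] by blast
    obtain q' where q': "\<forall>n. (D' ^^ n) ` I q' \<subseteq> I m" using uniform[OF lt cd' ti'] by blast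
    obtain J1 n1 where J1: "open_ideal I J1" and n1: "\<forall>n\<ge>n1. (D' ^^ n) ` {b + y | y. y \<in> J1} \<subseteq> I q"
      using top_integrableD[OF ti' open_ideal_self[OF lt]] by blast
    obtain J2 n2 where J2: "open_ideal I J2" and n2: "\<forall>n\<ge>n2. (D ^^ n) ` {b + y | y. y \<in> J2} \<subseteq> I q'"
      using top_integrableD[OF ti open_ideal_self[OF lt]] by blast
    have "\<forall>n\<ge>n1 + n2. ((\<lambda>b. D b + D' b) ^^ n) ` {b + y | y. y \<in> J1 \<inter> J2} \<subseteq> J'"
    proof (intro allI impI subsetI)
      fix n z assume n: "n \<ge> n1 + n2" and z: "z \<in> ((\<lambda>b. D b + D' b) ^^ n) ` {b + y | y. y \<in> J1 \<inter> J2}"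
      then obtain y where y: "y \<in> J1" "y \<in> J2" and zw: "z = ((\<lambda>b. D b + D' b) ^^ n) (b + y)" by blast
      have "\<forall>k l. k + l = n \<longrightarrow> (D ^^ k) ((D' ^^ l) (b + y)) \<in> J'"
      proof (intro allI impI)
        fix k l assume kl: "k + l = n"
        show "(D ^^ k) ((D' ^^ l) (b + y)) \<in> J'"
        proof (cases "l \<ge> n1")
          case True
          then have "(D' ^^ l) (b + y) \<in> I q" using imgD[OF n1 True y(1)] by simp
          then have "(D ^^ k) ((D' ^^ l) (b + y)) \<in> I m" by (rule imgD2[OF q[rule_format]])
          then show ?thesis using m by blast
        next
          case False
          then have "k \<ge> n2" using kl n by linarith
          then have "(D ^^ k) (b + y) \<in> I q'" using imgD[OF n2 _ y(2)] by blast
          then have "(D' ^^ l) ((D ^^ k) (b + y)) \<in> I m" by (rule imgD2[OF q'[rule_format]])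
          then have "(D ^^ k) ((D' ^^ l) (b + y)) \<in> I m" using comm_pow[OF c, of k l "b + y"] by simp
          then show ?thesis using m by blast
        qed
      qed
      then have "((\<lambda>b. D b + D' b) ^^ n) (b + y) \<in> J'" by (rule mp[OF spec[OF sum_pow[OF d(2) d'(2) c J'i]]])
      then show "z \<in> J'" using zw by simp
    qed
    then show "\<exists>J n0. open_ideal I J \<and> (\<forall>n\<ge>n0. ((\<lambda>b. D b + D' b) ^^ n) ` {b + y | y. y \<in> J} \<subseteq> J')"
      using open_ideal_inter[OF lt J1 J2] by blast
  qed
qed



lemma ring_homD: assumes "ring_hom f"
  shows "f 1 = 1" "\<forall>x y. f (x + y) = f x + f y" "\<forall>x y. f (x * y) = f x * f y"
  using assms unfolding ring_hom_def by auto

lemma open_mapD: "open_map I J f \<Longrightarrow> \<exists>m. {f x + z | z. z \<in> J m} \<subseteq> f ` {x + y | y. y \<in> I k}"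
  unfolding open_map_def by blast

lemma complete_lin: "complete_top I \<Longrightarrow> lin_top I" by (simp add: complete_top_def)

lemma part_c:
  fixes D :: "'b::comm_ring_1 \<Rightarrow> 'b" and pi :: "'b \<Rightarrow> 'c::comm_ring_1"
  assumes lt: "lin_top I" and cd: "cont_A_der I phi D" and ti: "top_integrable I D"
    and cJ: "complete_top J" and rh: "ring_hom pi" and cpi: "cont_map I J pi" and sj: "surj pi"
    and om: "open_map I J pi" and Db: "\<forall>b. Dbar (pi b) = pi (D b)"
  shows "cont_A_der J (pi \<circ> phi) Dbar \<and> top_integrable J Dbar"
proof
  note d = cont_A_derD[OF cd] and r = ring_homD[OF rh]
  have ltJ: "lin_top J" using cJ by (rule complete_lin)
  have srep: "\<exists>b. x = pi b" for x using sj by (metis surjD)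
  have pidiff: "pi (x - y) = pi x - pi y" for x y using add_hom_diff[OF r(2)] .
  have pieq: "z = pi y" if "pi b + z = pi (b + y)" for b y z
    using that r(2) by (metis add_left_cancel)
  have cm: "cont_map J J Dbar"
    unfolding cont_map_def
  proof (intro allI)
    fix x m
    obtain b where xb: "x = pi b" using srep by blast
    obtain p where p: "pi ` I p \<subseteq> J m" using cont_map0[OF cpi r(2)] by blast
    obtain q where q: "D ` I q \<subseteq> I p" using der_cont0[OF cd] by blast
    obtain k where k: "{pi b + z | z. z \<in> J k} \<subseteq> pi ` {b + y | y. y \<in> I q}" using open_mapD[OF om] by blast
    have "\<forall>z\<in>J k. Dbar (x + z) - Dbar x \<in> J m"
    proof
      fix z assume z: "z \<in> J k"
      then have "pi b + z \<in> pi ` {b + y | y. y \<in> I q}" using k by blast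
      then obtain y where y: "y \<in> I q" and e: "pi b + z = pi (b + y)" by blast
      have zy: "z = pi y" using pieq[OF e] .
      have "Dbar (x + z) - Dbar x = pi (D (b + y)) - pi (D b)" using xb e Db by simp
      also have "\<dots> = pi (D y)" using d(2) r(2) by simp
      also have "\<dots> \<in> J m" using imgD2[OF p imgD2[OF q y]] .
      finally show "Dbar (x + z) - Dbar x \<in> J m" .
    qed
    then show "\<exists>k. \<forall>z\<in>J k. Dbar (x + z) - Dbar x \<in> J m" by (rule exI)
  qed
  have add: "\<forall>x y. Dbar (x + y) = Dbar x + Dbar y"
  proof (intro allI)
    fix x y
    obtain a c where "x = pi a" "y = pi c" using srep by blast
    then show "Dbar (x + y) = Dbar x + Dbar y" using Db r(2) d(2) by (metis)
  qed
  have lin: "\<forall>a x. Dbar ((pi \<circ> phi) a * x) = (pi \<circ> phi) a * Dbar x"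
  proof (intro allI)
    fix a x
    obtain c where "x = pi c" using srep by blast
    then show "Dbar ((pi \<circ> phi) a * x) = (pi \<circ> phi) a * Dbar x" using Db r(3) d(3) by (metis comp_apply)
  qed
  have leib: "\<forall>x y. Dbar (x * y) = x * Dbar y + y * Dbar x"
  proof (intro allI)
    fix x y
    obtain a c where "x = pi a" "y = pi c" using srep by blast
    then show "Dbar (x * y) = x * Dbar y + y * Dbar x" using Db r(2) r(3) d(4) by (metis)
  qed
  show "cont_A_der J (pi \<circ> phi) Dbar" unfolding cont_A_der_def using cm add lin leib by blast
  have powpi: "(Dbar ^^ n) (pi w) = pi ((D ^^ n) w)" for n w
    by (induction n) (simp_all add: Db)
  show "top_integrable J Dbar"
    unfolding top_integrable_def
  proof (intro allI impI)
    fix x J' assume J': "open_ideal J J'"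
    obtain m where m: "J m \<subseteq> J'" using J' by (auto simp: open_ideal_def)
    obtain b where xb: "x = pi b" using srep by blast
    obtain p where p: "pi ` I p \<subseteq> J m" using cont_map0[OF cpi r(2)] by blast
    obtain J0 n0 where J0: "open_ideal I J0" and n0: "\<forall>n\<ge>n0. (D ^^ n) ` {b + y | y. y \<in> J0} \<subseteq> I p"
      using top_integrableD[OF ti open_ideal_self[OF lt]] by blast
    obtain q where q: "I q \<subseteq> J0" using J0 by (auto simp: open_ideal_def)
    obtain k where k: "{pi b + z | z. z \<in> J k} \<subseteq> pi ` {b + y | y. y \<in> I q}" using open_mapD[OF om] by blast
    have "\<forall>n\<ge>n0. (Dbar ^^ n) ` {x + z | z. z \<in> J k} \<subseteq> J'"
    proof (intro allI impI subsetI)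
      fix n w assume n: "n \<ge> n0" and w: "w \<in> (Dbar ^^ n) ` {x + z | z. z \<in> J k}"
      then obtain z where z: "z \<in> J k" and wz: "w = (Dbar ^^ n) (x + z)" by blast
      then have "pi b + z \<in> pi ` {b + y | y. y \<in> I q}" using k by blast
      then obtain y where y: "y \<in> I q" and e: "pi b + z = pi (b + y)" by blast
      have "(D ^^ n) (b + y) \<in> I p" using imgD[OF n0 n] y q by blast
      then have "pi ((D ^^ n) (b + y)) \<in> J m" by (rule imgD2[OF p])
      then show "w \<in> J'" using wz xb e powpi m by auto
    qed
    moreover have "open_ideal J (J k)" using ltJ by (rule open_ideal_self)
    ultimately show "\<exists>J0 n0. open_ideal J J0 \<and> (\<forall>n\<ge>n0. (Dbar ^^ n) ` {x + y | y. y \<in> J0} \<subseteq> J')"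
      by blast
  qed
qed



context
  fixes I :: "nat \<Rightarrow> 'b::comm_ring_1 set" and S :: "'b set" and D :: "'b \<Rightarrow> 'b" and phi :: "'a::comm_ring_1 \<Rightarrow> 'b"
  assumes lt: "lin_top I" and cd: "cont_A_der I phi D"
    and SD: "S \<subseteq> {f. D f = 0}" and S1: "1 \<in> S" and Sm: "\<forall>s\<in>S. \<forall>t\<in>S. s * t \<in> S"
begin

lemma rel_iff: "((b, s), (b', s')) \<in> loc_rel I S n \<longleftrightarrow> s \<in> S \<and> s' \<in> S \<and> (\<exists>u\<in>S. u * (b * s' - b' * s) \<in> I n)"
  by (simp add: loc_rel_def)

lemma rel_equiv: "equiv (UNIV \<times> S) (loc_rel I S n)"
proof -
  have id: "is_ideal (I n)" using lt by (rule lin_top_ideal)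
  have sub: "loc_rel I S n \<subseteq> (UNIV \<times> S) \<times> (UNIV \<times> S)" by (auto simp: loc_rel_def)
  have refl: "refl_on (UNIV \<times> S) (loc_rel I S n)"
  proof (rule refl_onI)
    fix p :: "'b \<times> 'b" assume "p \<in> UNIV \<times> S"
    then obtain b s where p: "p = (b, s)" "s \<in> S" by auto
    have "1 * (b * s - b * s) \<in> I n" using ideal_0[OF id] by simp
    then show "(p, p) \<in> loc_rel I S n" using p S1 rel_iff by blast
  qed
  have sym: "sym (loc_rel I S n)"
  proof (rule symI)
    fix p p' assume h: "(p, p') \<in> loc_rel I S n"
    obtain b s b' s' where pp: "p = (b, s)" "p' = (b', s')" by fastforce
    from h obtain u where u: "u \<in> S" "u * (b * s' - b' * s) \<in> I n" "s \<in> S" "s' \<in> S"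
      using pp rel_iff by blast
    have "- (u * (b * s' - b' * s)) \<in> I n" using ideal_uminus[OF id u(2)] .
    then have "u * (b' * s - b * s') \<in> I n" by (simp add: algebra_simps)
    then show "(p', p) \<in> loc_rel I S n" using pp u rel_iff by blast
  qed
  have trans: "trans (loc_rel I S n)"
  proof (rule transI)
    fix p p' p'' assume h1: "(p, p') \<in> loc_rel I S n" and h2: "(p', p'') \<in> loc_rel I S n"
    obtain b s b' s' b'' s'' where pp: "p = (b, s)" "p' = (b', s')" "p'' = (b'', s'')" by (metis surj_pair)
    from h1 obtain u where u: "u \<in> S" "u * (b * s' - b' * s) \<in> I n" "s \<in> S" "s' \<in> S"
      using pp rel_iff by blast
    from h2 obtain v where v: "v \<in> S" "v * (b' * s'' - b'' * s') \<in> I n" "s'' \<in> S"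
      using pp rel_iff by blast
    have "(v * s'') * (u * (b * s' - b' * s)) + (u * s) * (v * (b' * s'' - b'' * s')) \<in> I n"
      using ideal_add[OF id ideal_mult[OF id u(2)] ideal_mult[OF id v(2)]] .
    moreover have "(v * s'') * (u * (b * s' - b' * s)) + (u * s) * (v * (b' * s'' - b'' * s'))
       = (u * v * s') * (b * s'' - b'' * s)" by (simp add: algebra_simps)
    ultimately have "(u * v * s') * (b * s'' - b'' * s) \<in> I n" by simp
    moreover have "u * v * s' \<in> S" using Sm u v by blast
    ultimately show "(p, p'') \<in> loc_rel I S n" using pp u v rel_iff by blast
  qed
  show ?thesis using sub refl sym trans by (rule equivI)
qed

lemma quot_sub: "X \<in> loc_quot I S n \<Longrightarrow> X \<subseteq> UNIV \<times> S"
  unfolding loc_quot_def using rel_equiv by (rule in_quotient_imp_subset)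

lemma quot_nonempty: "X \<in> loc_quot I S n \<Longrightarrow> \<exists>p. p \<in> X"
  unfolding loc_quot_def by (metis quotientE equiv_class_self rel_equiv)

lemma quot_class: "X \<in> loc_quot I S n \<Longrightarrow> p \<in> X \<Longrightarrow> X = loc_rel I S n `` {p}"
  unfolding loc_quot_def by (metis quotientE equiv_class_eq rel_equiv Image_singleton_iff)

lemma quot_rel: "X \<in> loc_quot I S n \<Longrightarrow> p \<in> X \<Longrightarrow> p' \<in> X \<Longrightarrow> (p, p') \<in> loc_rel I S n"
  unfolding loc_quot_def by (metis quotient_eq_iff rel_equiv)

lemma compl_mono: "x \<in> loc_compl I S \<Longrightarrow> m \<le> k \<Longrightarrow> x k \<subseteq> x m"
  unfolding loc_compl_def using lift_Suc_antimono_le[of x] by blast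

lemma compl_quot: "x \<in> loc_compl I S \<Longrightarrow> x k \<in> loc_quot I S k"
  unfolding loc_compl_def by blast

lemma D_S: "s \<in> S \<Longrightarrow> D s = 0" using SD by blast

lemma rel_mono: "m \<le> n \<Longrightarrow> loc_rel I S n \<subseteq> loc_rel I S m"
  unfolding loc_rel_def using lin_top_mono[OF lt] by blast

lemma class_in_quot: "s \<in> S \<Longrightarrow> loc_rel I S n `` {(b, s)} \<in> loc_quot I S n"
  unfolding loc_quot_def by (rule quotientI) simp

lemma der_rel: assumes K: "D ` I K \<subseteq> I n" and r: "((b, s), (b', s')) \<in> loc_rel I S K"
  shows "((D b, s), (D b', s')) \<in> loc_rel I S n"
proof -
  note d = cont_A_derD[OF cd]
  from r obtain u where u: "u \<in> S" "u * (b * s' - b' * s) \<in> I K" and ss: "s \<in> S" "s' \<in> S"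
    using rel_iff by blast
  have "D (u * (b * s' - b' * s)) \<in> I n" using imgD2[OF K u(2)] .
  moreover have "D (u * (b * s' - b' * s)) = u * (D b * s' - D b' * s)"
  proof -
    have Du: "D u = 0" "D s = 0" "D s' = 0" using D_S u(1) ss by auto
    have "D (u * (b * s' - b' * s)) = u * D (b * s' - b' * s)" using d(4) Du by simp
    also have "D (b * s' - b' * s) = D (b * s') - D (b' * s)" using add_hom_diff[OF d(2)] .
    also have "D (b * s') = s' * D b" using d(4) Du by simp
    also have "D (b' * s) = s * D b'" using d(4) Du by simp
    finally show ?thesis by (simp add: algebra_simps)
  qed
  ultimately show ?thesis using u(1) ss rel_iff by auto
qed

lemma der_char: assumes x: "x \<in> loc_compl I S"
  shows "\<exists>K. \<forall>k'\<ge>K. \<forall>p\<in>x k'. loc_der I S D x n = loc_rel I S n `` {(D (fst p), snd p)}"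
proof -
  obtain K where K: "D ` I K \<subseteq> I n" using der_cont0[OF cd] by blast
  obtain p0 where p0: "p0 \<in> x K" using quot_nonempty[OF compl_quot[OF x]] by blast
  define c where "c = loc_rel I S n `` {(D (fst p0), snd p0)}"
  let ?P = "\<lambda>c. \<exists>k. \<forall>k'\<ge>k. \<forall>p\<in>x k'. c = loc_rel I S n `` {(D (fst p), snd p)}"
  have key: "\<forall>k'\<ge>K. \<forall>p\<in>x k'. c = loc_rel I S n `` {(D (fst p), snd p)}"
  proof (intro allI impI ballI)
    fix k' p assume k': "K \<le> k'" and p: "p \<in> x k'"
    have "p \<in> x K" using compl_mono[OF x k'] p by blast
    then have "(p, p0) \<in> loc_rel I S K" using quot_rel[OF compl_quot[OF x] _ p0] by blast
    then have "((fst p, snd p), (fst p0, snd p0)) \<in> loc_rel I S K" by simp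
    then have "((D (fst p), snd p), (D (fst p0), snd p0)) \<in> loc_rel I S n" using der_rel[OF K] by blast
    then show "c = loc_rel I S n `` {(D (fst p), snd p)}"
      unfolding c_def using equiv_class_eq[OF rel_equiv] by metis
  qed
  have "(THE c. ?P c) = c"
  proof (rule the_equality)
    show "?P c" using key by blast
  next
    fix c' assume "?P c'"
    then obtain k where k: "\<forall>k'\<ge>k. \<forall>p\<in>x k'. c' = loc_rel I S n `` {(D (fst p), snd p)}" by blast
    obtain p where p: "p \<in> x (max k K)" using quot_nonempty[OF compl_quot[OF x]] by blast
    have "c' = loc_rel I S n `` {(D (fst p), snd p)}" using k[rule_format, of "max k K" p] p by simp
    moreover have "c = loc_rel I S n `` {(D (fst p), snd p)}" using key[rule_format, of "max k K" p] p by simp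
    ultimately show "c' = c" by simp
  qed
  then have "loc_der I S D x n = c" unfolding loc_der_def by simp
  then show ?thesis using key by metis
qed

lemma der_compl: assumes x: "x \<in> loc_compl I S" shows "loc_der I S D x \<in> loc_compl I S"
proof -
  have q: "loc_der I S D x n \<in> loc_quot I S n" for n
  proof -
    obtain K where K: "\<forall>k'\<ge>K. \<forall>p\<in>x k'. loc_der I S D x n = loc_rel I S n `` {(D (fst p), snd p)}"
      using der_char[OF x] by blast
    obtain p where p: "p \<in> x K" using quot_nonempty[OF compl_quot[OF x]] by blast
    have "snd p \<in> S" using quot_sub[OF compl_quot[OF x, of K]] p by (auto simp: mem_Times_iff)
    then show ?thesis using K p class_in_quot by auto
  qed
  have m: "loc_der I S D x (Suc n) \<subseteq> loc_der I S D x n" for n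
  proof -
    obtain K1 where K1: "\<forall>k'\<ge>K1. \<forall>p\<in>x k'. loc_der I S D x n = loc_rel I S n `` {(D (fst p), snd p)}"
      using der_char[OF x] by blast
    obtain K2 where K2: "\<forall>k'\<ge>K2. \<forall>p\<in>x k'. loc_der I S D x (Suc n) = loc_rel I S (Suc n) `` {(D (fst p), snd p)}"
      using der_char[OF x] by blast
    obtain p where p: "p \<in> x (max K1 K2)" using quot_nonempty[OF compl_quot[OF x]] by blast
    have "loc_rel I S (Suc n) `` {(D (fst p), snd p)} \<subseteq> loc_rel I S n `` {(D (fst p), snd p)}"
      using rel_mono[of n "Suc n"] by auto
    then show ?thesis using K1[rule_format, of "max K1 K2" p] K2[rule_format, of "max K1 K2" p] p by simp
  qed
  show ?thesis unfolding loc_compl_def using q m by blast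
qed

lemma der_iter: "y \<in> loc_compl I S \<Longrightarrow>
  \<exists>K. \<forall>k'\<ge>K. \<forall>p\<in>y k'. ((loc_der I S D) ^^ n) y m = loc_rel I S m `` {((D ^^ n) (fst p), snd p)}"
proof (induction n arbitrary: y m)
  case 0
  have "\<forall>k'\<ge>m. \<forall>p\<in>y k'. ((loc_der I S D) ^^ 0) y m = loc_rel I S m `` {((D ^^ 0) (fst p), snd p)}"
  proof (intro allI impI ballI)
    fix k' p assume k': "m \<le> k'" and p: "p \<in> y k'"
    have "p \<in> y m" using compl_mono[OF 0 k'] p by blast
    then have "y m = loc_rel I S m `` {p}" using quot_class[OF compl_quot[OF 0]] by blast
    then show "((loc_der I S D) ^^ 0) y m = loc_rel I S m `` {((D ^^ 0) (fst p), snd p)}" by simp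
  qed
  then show ?case by blast
next
  case (Suc n)
  have dy: "loc_der I S D y \<in> loc_compl I S" using der_compl[OF Suc.prems] .
  obtain K1 where K1: "\<forall>k'\<ge>K1. \<forall>p\<in>loc_der I S D y k'. ((loc_der I S D) ^^ n) (loc_der I S D y) m
      = loc_rel I S m `` {((D ^^ n) (fst p), snd p)}" using Suc.IH[OF dy] by blast
  obtain K2 where K2: "\<forall>k'\<ge>K2. \<forall>p\<in>y k'. loc_der I S D y K1 = loc_rel I S K1 `` {(D (fst p), snd p)}"
    using der_char[OF Suc.prems] by blast
  have "\<forall>k'\<ge>K2. \<forall>p\<in>y k'. ((loc_der I S D) ^^ Suc n) y m = loc_rel I S m `` {((D ^^ Suc n) (fst p), snd p)}"
  proof (intro allI impI ballI)
    fix k' p assume k': "K2 \<le> k'" and p: "p \<in> y k'"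
    have e: "loc_der I S D y K1 = loc_rel I S K1 `` {(D (fst p), snd p)}" using K2 k' p by blast
    have "snd p \<in> S" using quot_sub[OF compl_quot[OF Suc.prems, of k']] p by (auto simp: mem_Times_iff)
    then have "(D (fst p), snd p) \<in> loc_der I S D y K1"
      unfolding e using equiv_class_self[OF rel_equiv] by blast
    then have "((loc_der I S D) ^^ n) (loc_der I S D y) m = loc_rel I S m `` {((D ^^ n) (D (fst p)), snd p)}"
      using K1 by auto
    moreover have "((loc_der I S D) ^^ Suc n) y = ((loc_der I S D) ^^ n) (loc_der I S D y)"
      by (simp only: funpow_Suc_right comp_apply)
    moreover have "(D ^^ Suc n) (fst p) = (D ^^ n) (D (fst p))"
      by (simp only: funpow_Suc_right comp_apply)
    ultimately show "((loc_der I S D) ^^ Suc n) y m = loc_rel I S m `` {((D ^^ Suc n) (fst p), snd p)}"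
      by simp
  qed
  then show ?case by blast
qed

lemma part_b: assumes ti: "top_integrable I D" shows "compl_top_integrable I S (loc_der I S D)"
  unfolding compl_top_integrable_def
proof (intro ballI allI)
  fix x m assume x: "x \<in> loc_compl I S"
  note d = cont_A_derD[OF cd]
  obtain q where q: "\<forall>n. (D ^^ n) ` I q \<subseteq> I m" using uniform[OF lt cd ti] by blast
  obtain p0 where p0: "p0 \<in> x q" using quot_nonempty[OF compl_quot[OF x]] by blast
  obtain b0 s0 where bs0: "p0 = (b0, s0)" by fastforce
  have s0: "s0 \<in> S" using quot_sub[OF compl_quot[OF x, of q]] p0 bs0 by auto
  obtain J n0 where J: "open_ideal I J" and n0: "\<forall>n\<ge>n0. (D ^^ n) ` {b0 + y | y. y \<in> J} \<subseteq> I m"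
    using top_integrableD[OF ti open_ideal_self[OF lt]] by blast
  have J0: "0 \<in> J" using J ideal_0 unfolding open_ideal_def by blast
  have idm: "is_ideal (I m)" using lt by (rule lin_top_ideal)
  have "\<forall>n\<ge>n0. \<forall>y\<in>loc_compl I S. y q = x q \<longrightarrow> ((loc_der I S D) ^^ n) y m = loc_rel I S m `` {(0, 1)}"
  proof (intro allI impI ballI)
    fix n y assume n: "n0 \<le> n" and y: "y \<in> loc_compl I S" and yx: "y q = x q"
    have Db0: "(D ^^ n) b0 \<in> I m" using imgD[OF n0 n J0] by simp
    obtain K where K: "\<forall>k'\<ge>K. \<forall>p\<in>y k'. ((loc_der I S D) ^^ n) y m = loc_rel I S m `` {((D ^^ n) (fst p), snd p)}"
      using der_iter[OF y] by blast
    obtain p where p: "p \<in> y (max K q)" using quot_nonempty[OF compl_quot[OF y]] by blast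
    obtain b s where bs: "p = (b, s)" by fastforce
    have e: "((loc_der I S D) ^^ n) y m = loc_rel I S m `` {((D ^^ n) b, s)}" using K[rule_format, of "max K q" p] p bs by simp
    have "p \<in> x q" using compl_mono[OF y, of q "max K q"] p yx by auto
    then have "(p, p0) \<in> loc_rel I S q" using quot_rel[OF compl_quot[OF x] _ p0] by blast
    then obtain u where u: "u \<in> S" "u * (b * s0 - b0 * s) \<in> I q" and s: "s \<in> S"
      using bs bs0 rel_iff by blast
    have "(D ^^ n) (u * (b * s0 - b0 * s)) \<in> I m" using imgD2[OF q[rule_format] u(2)] .
    moreover have "(D ^^ n) (u * (b * s0 - b0 * s)) = u * s0 * (D ^^ n) b - u * s * (D ^^ n) b0"
    proof -
      have Dz: "D u = 0" "D s = 0" "D s0 = 0" using D_S u(1) s s0 by auto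
      have "(D ^^ n) (u * (b * s0 - b0 * s)) = (D ^^ n) ((u * s0) * b - (u * s) * b0)"
        by (simp add: algebra_simps)
      also have "\<dots> = (D ^^ n) ((u * s0) * b) - (D ^^ n) ((u * s) * b0)"
        by (rule add_hom_diff) (rule allI, rule allI, rule funpow_additive[OF d(2)])
      also have "(D ^^ n) ((u * s0) * b) = (u * s0) * (D ^^ n) b"
        by (rule funpow_const[OF d(4)]) (simp add: d(4) Dz)
      also have "(D ^^ n) ((u * s) * b0) = (u * s) * (D ^^ n) b0"
        by (rule funpow_const[OF d(4)]) (simp add: d(4) Dz)
      finally show ?thesis .
    qed
    ultimately have "u * s0 * (D ^^ n) b - u * s * (D ^^ n) b0 \<in> I m" by simp
    moreover have "u * s * (D ^^ n) b0 \<in> I m" using ideal_mult[OF idm Db0] .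
    ultimately have "u * s0 * (D ^^ n) b \<in> I m" by (rule ideal_diff_rev[OF idm])
    then have "(u * s0) * ((D ^^ n) b * 1 - 0 * s) \<in> I m" by (simp add: algebra_simps)
    moreover have "u * s0 \<in> S" using Sm u(1) s0 by blast
    ultimately have "(((D ^^ n) b, s), (0, 1)) \<in> loc_rel I S m" using rel_iff s S1 by blast
    then show "((loc_der I S D) ^^ n) y m = loc_rel I S m `` {(0, 1)}"
      using e equiv_class_eq[OF rel_equiv] by metis
  qed
  then show "\<exists>k n0. \<forall>n\<ge>n0. \<forall>y\<in>loc_compl I S. y k = x k \<longrightarrow> ((loc_der I S D) ^^ n) y m = loc_rel I S m `` {(0, 1)}"
    by blast
qed

end


theorem proposition2p28:
  fixes IA :: "nat \<Rightarrow> 'a::comm_ring_1 set" and I :: "nat \<Rightarrow> 'b::comm_ring_1 set"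
    and phi :: "'a \<Rightarrow> 'b" and D :: "'b \<Rightarrow> 'b"
  assumes "lin_top IA"
    and "\<forall>n::nat. n \<noteq> 0 \<longrightarrow> (\<exists>y::'a. of_nat n * y = 1)"
    and "complete_top I" and "ring_hom phi" and "cont_map IA I phi"
    and "cont_A_der I phi D" and "top_integrable I D"
  shows "(\<forall>f. D f = 0 \<longrightarrow> cont_A_der I phi (\<lambda>b. f * D b) \<and> top_integrable I (\<lambda>b. f * D b))
    \<and> (\<forall>S. S \<subseteq> {f. D f = 0} \<and> 1 \<in> S \<and> (\<forall>s\<in>S. \<forall>t\<in>S. s * t \<in> S)
          \<longrightarrow> compl_top_integrable I S (loc_der I S D))
    \<and> (\<forall>(J :: nat \<Rightarrow> 'c::comm_ring_1 set) pi Dbar.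
          complete_top J \<and> ring_hom pi \<and> cont_map I J pi \<and> surj pi \<and> open_map I J pi
          \<and> D ` {b. pi b = 0} \<subseteq> {b. pi b = 0} \<and> (\<forall>b. Dbar (pi b) = pi (D b))
          \<longrightarrow> cont_A_der J (pi \<circ> phi) Dbar \<and> top_integrable J Dbar)
    \<and> (\<forall>D'. cont_A_der I phi D' \<and> top_integrable I D' \<and> D \<circ> D' = D' \<circ> D
          \<longrightarrow> cont_A_der I phi (\<lambda>b. D b + D' b) \<and> top_integrable I (\<lambda>b. D b + D' b))"
proof -
  note cd = assms(6) and ti = assms(7)
  have lt: "lin_top I" using assms(3) by (rule complete_lin)
  have h1: "\<forall>f. D f = 0 \<longrightarrow> cont_A_der I phi (\<lambda>b. f * D b) \<and> top_integrable I (\<lambda>b. f * D b)"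
  proof (intro allI impI)
    fix f assume "D f = 0"
    then show "cont_A_der I phi (\<lambda>b. f * D b) \<and> top_integrable I (\<lambda>b. f * D b)"
      by (rule part_a[OF lt cd ti])
  qed
  have h2: "\<forall>S. S \<subseteq> {f. D f = 0} \<and> 1 \<in> S \<and> (\<forall>s\<in>S. \<forall>t\<in>S. s * t \<in> S)
          \<longrightarrow> compl_top_integrable I S (loc_der I S D)"
  proof (intro allI impI)
    fix S :: "'b set" assume h: "S \<subseteq> {f. D f = 0} \<and> 1 \<in> S \<and> (\<forall>s\<in>S. \<forall>t\<in>S. s * t \<in> S)"
    then have a: "S \<subseteq> {f. D f = 0}" and b: "1 \<in> S" and c: "\<forall>s\<in>S. \<forall>t\<in>S. s * t \<in> S" by auto
    show "compl_top_integrable I S (loc_der I S D)"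
      by (rule part_b[OF lt cd a b c ti])
  qed
  have h3: "\<forall>(J :: nat \<Rightarrow> 'c::comm_ring_1 set) pi Dbar.
          complete_top J \<and> ring_hom pi \<and> cont_map I J pi \<and> surj pi \<and> open_map I J pi
          \<and> D ` {b. pi b = 0} \<subseteq> {b. pi b = 0} \<and> (\<forall>b. Dbar (pi b) = pi (D b))
          \<longrightarrow> cont_A_der J (pi \<circ> phi) Dbar \<and> top_integrable J Dbar"
  proof (intro allI impI)
    fix J :: "nat \<Rightarrow> 'c::comm_ring_1 set" and pi Dbar
    assume h: "complete_top J \<and> ring_hom pi \<and> cont_map I J pi \<and> surj pi \<and> open_map I J pi
          \<and> D ` {b. pi b = 0} \<subseteq> {b. pi b = 0} \<and> (\<forall>b. Dbar (pi b) = pi (D b))"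
    then have a: "complete_top J" "ring_hom pi" "cont_map I J pi" "surj pi" "open_map I J pi"
       "\<forall>b. Dbar (pi b) = pi (D b)" by auto
    show "cont_A_der J (pi \<circ> phi) Dbar \<and> top_integrable J Dbar"
      by (rule part_c[OF lt cd ti a])
  qed
  have h4: "\<forall>D'. cont_A_der I phi D' \<and> top_integrable I D' \<and> D \<circ> D' = D' \<circ> D
          \<longrightarrow> cont_A_der I phi (\<lambda>b. D b + D' b) \<and> top_integrable I (\<lambda>b. D b + D' b)"
  proof (intro allI impI)
    fix D' assume h: "cont_A_der I phi D' \<and> top_integrable I D' \<and> D \<circ> D' = D' \<circ> D"
    then have a: "cont_A_der I phi D'" "top_integrable I D'" "D \<circ> D' = D' \<circ> D" by auto
    show "cont_A_der I phi (\<lambda>b. D b + D' b) \<and> top_integrable I (\<lambda>b. D b + D' b)"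
      by (rule part_d[OF lt cd ti a])
  qed
  show ?thesis using h1 h2 h3 h4 by (intro conjI)
qed

end
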